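(* There exist constants $c>0$ and $N_0$ such that for every $N\ge N_0$ that is a power of two there exists an interval graph $G=(V,E)$ with $|V|=N$ nodes satisfying the following. When the nodes are labeled $v_0,\dots,v_{N-1}$ in increasing order of the left endpoints of their intervals, the minimal $\pi$-OBDD representing $\chi_E$ has at least $c\,N\log N$ nodes, where $\pi$ is the $2$-interleaved variable order with decreasing significance.
   Context: An interval graph on $N$ nodes is given by intervals $[a_i,b_i]$ with $a_i<b_i$, $0\le i\le N-1$; two distinct nodes are adjacent iff their intervals intersect. Without loss of generality all $2N$ endpoints are distinct, so the left endpoints determine a unique labeling $v_0,\dots,v_{N-1}$ with $a_0<a_1<\dots<a_{N-1}$. Let $n=\lceil\log_2 N\rceil$. For $x=(x_0,\dots,x_{n-1})\in\{0,1\}^n$ put $|x|=\sum_{i=0}^{n-1}x_i2^i$. The characteristic function $\chi_E:\{0,1\}^{2n}\to\{0,1\}$ is defined by $\chi_E(x,y)=1$ iff $|x|,|y|<N$ and $\{v_{|x|},v_{|y|}\}\in E$. A $\pi$-OBDD for a variable order $\pi$ (a linear order of the input variables) is a directed acyclic rooted graph with two sinks labeled $0$ and $1$. Every inner node is labeled by a variable and has two outgoing edges labeled $0$ and $1$, and along every edge the variables respect $\pi$. An assignment determines a path from the root by following, at each node labeled $x_i$, the edge labeled by the value of $x_i$. The OBDD represents $f$ if this path always ends in the sink labeled $f(\text{assignment})$. The size of an OBDD is its number of nodes. The $2$-interleaved variable order with decreasing significance on $x,y\in\{0,1\}^n$ is $(x_{n-1},y_{n-1},x_{n-2},y_{n-2},\dots,x_0,y_0)$.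 *)

theory Defs
  imports Main "HOL-Library.Log_Nat" Complex_Main
begin

definition interval_rep :: "nat \<Rightarrow> (nat \<Rightarrow> real) \<Rightarrow> (nat \<Rightarrow> real) \<Rightarrow> bool" where
  "interval_rep N a b \<longleftrightarrow>
     (\<forall>i<N. a i < b i) \<and>
     (\<forall>i<N. \<forall>j<N. a i \<noteq> b j) \<and>
     (\<forall>i<N. \<forall>j<N. i \<noteq> j \<longrightarrow> a i \<noteq> a j \<and> b i \<noteq> b j) \<and>
     (\<forall>i<N. \<forall>j<N. i < j \<longrightarrow> a i < a j)"

definition iadj :: "(nat \<Rightarrow> real) \<Rightarrow> (nat \<Rightarrow> real) \<Rightarrow> nat \<Rightarrow> nat \<Rightarrow> bool" where
  "iadj a b i j \<longleftrightarrow> i \<noteq> j \<and> max (a i) (a j) \<le> min (b i) (b j)"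

datatype var = X nat | Y nat

definition clog :: "nat \<Rightarrow> nat" where
  "clog N = nat \<lceil>log 2 (real N)\<rceil>"

definition bitval :: "nat \<Rightarrow> (nat \<Rightarrow> bool) \<Rightarrow> nat" where
  "bitval n x = (\<Sum>i<n. if x i then 2 ^ i else 0)"

definition chiE :: "nat \<Rightarrow> (nat \<Rightarrow> real) \<Rightarrow> (nat \<Rightarrow> real) \<Rightarrow> (var \<Rightarrow> bool) \<Rightarrow> bool" where
  "chiE N a b asg =
     (let n = clog N; i = bitval n (\<lambda>k. asg (X k)); j = bitval n (\<lambda>k. asg (Y k))
      in i < N \<and> j < N \<and> iadj a b i j)"

definition interleaved_order :: "nat \<Rightarrow> var list" where
  "interleaved_order n = concat (map (\<lambda>i. [X i, Y i]) (rev [0..<n]))"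

datatype 'v node = Sink bool | Inner 'v nat nat  \<comment> \<open>variable, 0-successor, 1-successor\<close>

record 'v obdd =
  nodes :: "nat set"
  root :: nat
  lab :: "nat \<Rightarrow> 'v node"

definition before :: "'v list \<Rightarrow> 'v \<Rightarrow> 'v \<Rightarrow> bool" where
  "before \<pi> x y \<longleftrightarrow> (\<exists>i j. i < j \<and> j < length \<pi> \<and> \<pi> ! i = x \<and> \<pi> ! j = y)"

definition edge_ok :: "'v list \<Rightarrow> 'v obdd \<Rightarrow> 'v \<Rightarrow> nat \<Rightarrow> bool" where
  "edge_ok \<pi> B x w \<longleftrightarrow> w \<in> nodes B \<and>
     (case lab B w of Sink _ \<Rightarrow> True | Inner y _ _ \<Rightarrow> before \<pi> x y)"

definition is_obdd :: "'v list \<Rightarrow> 'v obdd \<Rightarrow> bool" where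
  "is_obdd \<pi> B \<longleftrightarrow>
     finite (nodes B) \<and> root B \<in> nodes B \<and>
     (\<exists>s0 s1. {v \<in> nodes B. \<exists>c. lab B v = Sink c} = {s0, s1} \<and>
              lab B s0 = Sink False \<and> lab B s1 = Sink True) \<and>
     (\<forall>v \<in> nodes B. case lab B v of
         Sink _ \<Rightarrow> True
       | Inner x l h \<Rightarrow> x \<in> set \<pi> \<and> edge_ok \<pi> B x l \<and> edge_ok \<pi> B x h)"

inductive ends_in :: "'v obdd \<Rightarrow> ('v \<Rightarrow> bool) \<Rightarrow> nat \<Rightarrow> bool \<Rightarrow> bool" for B asg where
  sink: "lab B v = Sink c \<Longrightarrow> ends_in B asg v c"
| inner: "lab B v = Inner x l h \<Longrightarrow> ends_in B asg (if asg x then h else l) c \<Longrightarrow> ends_in B asg v c"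

definition represents :: "'v obdd \<Rightarrow> (('v \<Rightarrow> bool) \<Rightarrow> bool) \<Rightarrow> bool" where
  "represents B f \<longleftrightarrow> (\<forall>asg. ends_in B asg (root B) (f asg))"

end

theory Submission
  imports Defs
begin


lemma io_Suc: "interleaved_order (Suc n) = X n # Y n # interleaved_order n"
  by (simp add: interleaved_order_def)

lemma io_length: "length (interleaved_order n) = 2*n"
  by (induct n) (simp_all add: io_Suc interleaved_order_def)

lemma io_nth: "i < 2*n \<Longrightarrow> interleaved_order n ! i = (if even i then X (n-1-i div 2) else Y (n-1-i div 2))"
proof (induct n arbitrary: i)
  case 0 then show ?case by simp
next
  case (Suc n)
  show ?case
  proof (cases i)
    case 0 then show ?thesis by (simp add: io_Suc)
  next
    case (Suc i1)
    show ?thesis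
    proof (cases i1)
      case 0 then show ?thesis using Suc by (simp add: io_Suc)
    next
      case (Suc i2)
      have "i2 < 2*n" using Suc.prems \<open>i = Suc i1\<close> Suc by simp
      then show ?thesis using Suc.hyps \<open>i = Suc i1\<close> Suc by (auto simp add: io_Suc)
    qed
  qed
qed

definition rk :: "nat \<Rightarrow> var \<Rightarrow> nat" where
  "rk n z = (case z of X j \<Rightarrow> 2*(n-1-j) | Y j \<Rightarrow> 2*(n-1-j)+1)"

lemma rk_nth: "i < 2*n \<Longrightarrow> rk n (interleaved_order n ! i) = i"
  by (auto simp: io_nth rk_def)

lemma set_io: "z \<in> set (interleaved_order n) \<longleftrightarrow> (\<exists>j<n. z = X j \<or> z = Y j)"
  by (induct n) (auto simp: io_Suc interleaved_order_def)

lemma rk_lt: "z \<in> set (interleaved_order n) \<Longrightarrow> rk n z < 2*n"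
  by (auto simp: set_io rk_def)

lemma before_rk: "before (interleaved_order n) x y \<Longrightarrow> rk n x < rk n y"
  unfolding before_def using rk_nth io_length by (metis order.strict_trans)




definition lvl :: "nat \<Rightarrow> var obdd \<Rightarrow> nat \<Rightarrow> nat" where
  "lvl n B v = (case lab B v of Sink _ \<Rightarrow> 2*n | Inner x _ _ \<Rightarrow> rk n x)"

lemma obdd_child:
  assumes "is_obdd (interleaved_order n) B" "v \<in> nodes B" "lab B v = Inner x l h"
  shows "l \<in> nodes B \<and> h \<in> nodes B \<and> lvl n B v < lvl n B l \<and> lvl n B v < lvl n B h
         \<and> rk n x = lvl n B v \<and> x \<in> set (interleaved_order n)"
proof -
  have "x \<in> set (interleaved_order n)" and el: "edge_ok (interleaved_order n) B x l"
    and eh: "edge_ok (interleaved_order n) B x h"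
    using assms unfolding is_obdd_def by (metis (no_types, lifting) node.simps(6))+
  have lv: "lvl n B v = rk n x" using assms(3) by (simp add: lvl_def)
  have gen: "w \<in> nodes B \<and> rk n x < lvl n B w" if "edge_ok (interleaved_order n) B x w" for w
  proof (cases "lab B w")
    case (Sink c) then show ?thesis using that rk_lt[OF \<open>x \<in> _\<close>] by (simp add: edge_ok_def lvl_def)
  next
    case (Inner y l' h') then show ?thesis using that before_rk by (simp add: edge_ok_def lvl_def)
  qed
  show ?thesis using gen[OF el] gen[OF eh] lv \<open>x \<in> _\<close> by simp
qed


lemma lvl_le: "is_obdd (interleaved_order n) B \<Longrightarrow> v \<in> nodes B \<Longrightarrow> lvl n B v \<le> 2*n"
proof (cases "lab B v")
  case (Inner x l h)
  assume a: "is_obdd (interleaved_order n) B" "v \<in> nodes B"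
  have "x \<in> set (interleaved_order n)" using obdd_child[OF a Inner] by blast
  then show ?thesis using Inner rk_lt[of x n] by (simp add: lvl_def)
qed (simp add: lvl_def)


lemma ends_det: "ends_in B asg v c \<Longrightarrow> ends_in B asg v c' \<Longrightarrow> c = c'"
proof (induct arbitrary: c' rule: ends_in.induct)
  case (sink v c)
  from sink.prems sink.hyps show ?case by (cases rule: ends_in.cases) auto
next
  case (inner v x l h c)
  have IH: "\<And>c'. ends_in B asg (if asg x then h else l) c' \<Longrightarrow> c = c'" by fact
  from inner.prems inner.hyps(1) IH show ?case by (cases rule: ends_in.cases) auto
qed


lemma ends_indep:
  assumes ob: "is_obdd (interleaved_order n) B"
  shows "ends_in B asg v c \<Longrightarrow> v \<in> nodes B \<Longrightarrow>
    (\<forall>z\<in>set (interleaved_order n). lvl n B v \<le> rk n z \<longrightarrow> asg z = asg' z) \<Longrightarrow> ends_in B asg' v c"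
proof (induct rule: ends_in.induct)
  case (sink v c) show ?case using sink.hyps by (rule ends_in.sink)
next
  case (inner v x l h c)
  note ch = obdd_child[OF ob inner.prems(1) inner.hyps(1)]
  have ax: "asg x = asg' x" using inner.prems(2) ch by simp
  define w where "w = (if asg x then h else l)"
  have w: "w \<in> nodes B" "lvl n B v < lvl n B w" using ch unfolding w_def by simp_all
  have "ends_in B asg' w c"
  proof (rule inner.hyps(3)[folded w_def])
    show "w \<in> nodes B" by (rule w(1))
    show "\<forall>z\<in>set (interleaved_order n). lvl n B w \<le> rk n z \<longrightarrow> asg z = asg' z"
    proof (intro ballI impI)
      fix z assume z: "z \<in> set (interleaved_order n)" "lvl n B w \<le> rk n z"
      then have "lvl n B v \<le> rk n z" using w(2) by linarith
      then show "asg z = asg' z" using inner.prems(2) z(1) by blast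
    qed
  qed
  then have "ends_in B asg' (if asg' x then h else l) c" unfolding w_def ax .
  then show ?case by (rule ends_in.inner[OF inner.hyps(1)])
qed

inductive reach :: "nat \<Rightarrow> var obdd \<Rightarrow> (var \<Rightarrow> bool) \<Rightarrow> nat \<Rightarrow> nat \<Rightarrow> nat \<Rightarrow> bool"
  for n B asg k where
  stop: "k \<le> lvl n B v \<Longrightarrow> reach n B asg k v v"
| step: "lvl n B v < k \<Longrightarrow> lab B v = Inner x l h \<Longrightarrow> reach n B asg k (if asg x then h else l) w
     \<Longrightarrow> reach n B asg k v w"

lemma reach_ex:
  assumes ob: "is_obdd (interleaved_order n) B" and k: "k \<le> 2*n"
  shows "v \<in> nodes B \<Longrightarrow> \<exists>w. reach n B asg k v w \<and> w \<in> nodes B \<and> k \<le> lvl n B w"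
proof (induct "2*n - lvl n B v" arbitrary: v rule: less_induct)
  case less
  show ?case
  proof (cases "k \<le> lvl n B v")
    case True then show ?thesis using less.prems reach.stop by blast
  next
    case False
    then have F: "lvl n B v < k" by simp
    obtain x l h where L: "lab B v = Inner x l h"
    proof (cases "lab B v")
      case (Sink c) then show ?thesis using F k by (simp add: lvl_def)
    next
      case (Inner x l h) then show ?thesis using that by blast
    qed
    note ch = obdd_child[OF ob less.prems L]
    define c where "c = (if asg x then h else l)"
    have c: "c \<in> nodes B" "lvl n B v < lvl n B c" using ch unfolding c_def by simp_all
    have "2*n - lvl n B c < 2*n - lvl n B v" using c lvl_le[OF ob c(1)] by linarith
    then obtain w where w: "reach n B asg k c w" "w \<in> nodes B" "k \<le> lvl n B w"
      using less.hyps c(1) by blast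
    have "reach n B asg k v w" using reach.step[OF F L] w(1) unfolding c_def .
    then show ?thesis using w by blast
  qed
qed

lemma reach_indep:
  assumes ob: "is_obdd (interleaved_order n) B"
  shows "reach n B asg k v w \<Longrightarrow> v \<in> nodes B \<Longrightarrow>
    (\<forall>z\<in>set (interleaved_order n). rk n z < k \<longrightarrow> asg z = asg' z) \<Longrightarrow> reach n B asg' k v w"
proof (induct rule: reach.induct)
  case (stop v) show ?case using stop.hyps by (rule reach.stop)
next
  case (step v x l h w)
  note ch = obdd_child[OF ob step.prems(1) step.hyps(2)]
  have "rk n x < k" using ch step.hyps(1) by simp
  then have ax: "asg x = asg' x" using step.prems(2) ch by blast
  have c: "(if asg x then h else l) \<in> nodes B" using ch by simp
  have "reach n B asg' k (if asg x then h else l) w"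
    using step.hyps(4)[OF c step.prems(2)] .
  then have "reach n B asg' k (if asg' x then h else l) w" unfolding ax .
  then show ?case by (rule reach.step[OF step.hyps(1,2)])
qed

lemma reach_ends:
  "reach n B asg k v w \<Longrightarrow> ends_in B asg v c \<Longrightarrow> ends_in B asg w c"
proof (induct rule: reach.induct)
  case (stop v) then show ?case by simp
next
  case (step v x l h w)
  from step.prems have "ends_in B asg (if asg x then h else l) c"
  proof (cases rule: ends_in.cases)
    case (sink) then show ?thesis using step.hyps(2) by simp
  next
    case (inner x' l' h') then have "x = x' \<and> l = l' \<and> h = h'" using step.hyps(2) by simp
    then show ?thesis using inner by (cases "asg x'") auto
  qed
  then show ?case by (rule step.hyps(4))
qed


definition asg2 :: "nat \<Rightarrow> nat \<Rightarrow> var \<Rightarrow> bool" where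
  "asg2 u v z = (case z of X j \<Rightarrow> bit u j | Y j \<Rightarrow> bit v j)"

lemma bitval_bit: "bitval n (\<lambda>j. bit (u::nat) j) = u mod 2^n"
proof (induct n)
  case 0 then show ?case by (simp add: bitval_def)
next
  case (Suc n)
  have "bitval (Suc n) (\<lambda>j. bit u j) = bitval n (\<lambda>j. bit u j) + (if bit u n then 2^n else 0)"
    by (simp add: bitval_def)
  also have "\<dots> = 2^n * of_bool (bit u n) + u mod 2^n" using Suc by simp
  also have "\<dots> = u mod 2^Suc n" using take_bit_Suc_from_most[of n u] by (simp only: take_bit_eq_mod)
  finally show ?case .
qed

lemma clog_pow: "clog (2^n) = n"
  by (simp add: clog_def)

lemma chiE_asg2: "u < 2^n \<Longrightarrow> v < 2^n \<Longrightarrow> chiE (2^n) a b (asg2 u v) = iadj a b u v"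
  by (simp add: chiE_def clog_pow asg2_def bitval_bit Let_def)

lemma bit_hi: "(u::nat) div 2^m = u' div 2^m \<Longrightarrow> m \<le> j \<Longrightarrow> bit u j = bit u' j"
proof -
  assume a: "u div 2^m = u' div 2^m" "m \<le> j"
  have "bit u j = bit (drop_bit m u) (j - m)" using a(2) by (simp add: bit_drop_bit_eq)
  also have "\<dots> = bit (drop_bit m u') (j - m)" using a(1) by (simp add: drop_bit_eq_div)
  also have "\<dots> = bit u' j" using a(2) by (simp add: bit_drop_bit_eq)
  finally show ?thesis .
qed

lemma bit_lo: "(u::nat) mod 2^m = u' mod 2^m \<Longrightarrow> j < m \<Longrightarrow> bit u j = bit u' j"
proof -
  assume a: "u mod 2^m = u' mod 2^m" "j < m"
  have "bit u j = bit (take_bit m u) j" using a(2) by (simp add: bit_take_bit_iff)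
  also have "\<dots> = bit (take_bit m u') j" using a(1) by (simp add: take_bit_eq_mod)
  also have "\<dots> = bit u' j" using a(2) by (simp add: bit_take_bit_iff)
  finally show ?thesis .
qed

lemma agree_hi:
  assumes "(u::nat) div 2^m = u' div 2^m" "(v::nat) div 2^m = v' div 2^m" "m \<le> n"
  shows "\<forall>z\<in>set (interleaved_order n). rk n z < 2*(n-m) \<longrightarrow> asg2 u v z = asg2 u' v' z"
proof (intro ballI impI)
  fix z assume z: "z \<in> set (interleaved_order n)" "rk n z < 2*(n-m)"
  then obtain j where j: "j < n" "z = X j \<or> z = Y j" by (auto simp: set_io)
  have "m \<le> j" using j z(2) by (auto simp: rk_def)
  then show "asg2 u v z = asg2 u' v' z" using j(2) bit_hi[OF assms(1)] bit_hi[OF assms(2)]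
    by (auto simp: asg2_def)
qed

lemma agree_lo:
  assumes "(u::nat) mod 2^m = u' mod 2^m" "(v::nat) mod 2^m = v' mod 2^m" "m \<le> n"
  shows "\<forall>z\<in>set (interleaved_order n). 2*(n-m) \<le> rk n z \<longrightarrow> asg2 u v z = asg2 u' v' z"
proof (intro ballI impI)
  fix z assume z: "z \<in> set (interleaved_order n)" "2*(n-m) \<le> rk n z"
  then obtain j where j: "j < n" "z = X j \<or> z = Y j" by (auto simp: set_io)
  have "j < m" using j z(2) assms(3) by (auto simp: rk_def)
  then show "asg2 u v z = asg2 u' v' z" using j(2) bit_lo[OF assms(1)] bit_lo[OF assms(2)]
    by (auto simp: asg2_def)
qed


lemma level_count:
  fixes U V :: "'i \<Rightarrow> nat" and f :: "(var \<Rightarrow> bool) \<Rightarrow> bool"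
  assumes ob: "is_obdd (interleaved_order n) B" and rep: "represents B f"
    and m: "1 \<le> m" "m \<le> n" and fin: "finite I"
    and g_def: "\<And>i x y. g i x y = f (asg2 (U i * 2^m + x) (V i * 2^m + y))"
    and inj: "\<And>i j. i \<in> I \<Longrightarrow> j \<in> I \<Longrightarrow> (\<forall>x<2^m. \<forall>y<2^m. g i x y = g j x y) \<Longrightarrow> i = j"
    and dep: "\<And>i. i \<in> I \<Longrightarrow> \<exists>x<2^m. \<exists>x'<2^m. \<exists>y<2^m. x mod 2^(m-1) = x' mod 2^(m-1) \<and> g i x y \<noteq> g i x' y"
  shows "card I \<le> card {w \<in> nodes B. lvl n B w = 2*(n-m) \<or> lvl n B w = 2*(n-m)+1}"
proof -
  define k where "k = 2*(n-m)"
  have k: "k \<le> 2*n" unfolding k_def by simp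
  have root: "root B \<in> nodes B" using ob unfolding is_obdd_def by blast
  define base where "base i = asg2 (U i * 2^m) (V i * 2^m)" for i
  define ws where "ws i = (SOME w. reach n B (base i) k (root B) w \<and> w \<in> nodes B \<and> k \<le> lvl n B w)" for i
  have ws: "reach n B (base i) k (root B) (ws i) \<and> ws i \<in> nodes B \<and> k \<le> lvl n B (ws i)" for i
    unfolding ws_def by (rule someI_ex) (rule reach_ex[OF ob k root])
  have E: "ends_in B (asg2 (U i * 2^m + x) (V i * 2^m + y)) (ws i) (g i x y)" if xy: "x < 2^m" "y < 2^m" for i x y
  proof -
    have d1: "(U i * 2^m + x) div 2^m = (U i * 2^m) div 2^m" using xy by simp
    have d2: "(V i * 2^m + y) div 2^m = (V i * 2^m) div 2^m" using xy by simp
    have ag: "\<forall>z\<in>set (interleaved_order n). rk n z < k \<longrightarrow>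
       base i z = asg2 (U i * 2^m + x) (V i * 2^m + y) z"
      unfolding base_def k_def by (rule agree_hi[OF d1[symmetric] d2[symmetric] m(2)])
    have r: "reach n B (asg2 (U i * 2^m + x) (V i * 2^m + y)) k (root B) (ws i)"
      by (rule reach_indep[OF ob _ root ag]) (use ws in blast)
    have "ends_in B (asg2 (U i * 2^m + x) (V i * 2^m + y)) (root B) (g i x y)"
      using rep unfolding represents_def g_def by blast
    then show ?thesis by (rule reach_ends[OF r])
  qed
  have lo: "ws i \<in> nodes B \<and> k \<le> lvl n B (ws i)" for i using ws by blast
  have hi: "lvl n B (ws i) \<le> k+1" if i: "i \<in> I" for i
  proof (rule ccontr)
    assume "\<not> lvl n B (ws i) \<le> k+1"
    then have L: "2*(n-(m-1)) \<le> lvl n B (ws i)" using m unfolding k_def by linarith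
    obtain x x' y where xx: "x < 2^m" "x' < 2^m" "y < 2^m" "x mod 2^(m-1) = x' mod 2^(m-1)"
      "g i x y \<noteq> g i x' y" using dep[OF i] by blast
    have p2: "(2::nat)^(m-1) dvd 2^m" using m by (simp add: le_imp_power_dvd)
    have "(U i * 2^m + x) mod 2^(m-1) = x mod 2^(m-1)"
      using p2 by (metis dvd_mult mod_mult_self3 mult.commute dvd_imp_mod_0 mod_add_left_eq add_0 add.commute mod_mod_cancel)
    moreover have "(U i * 2^m + x') mod 2^(m-1) = x' mod 2^(m-1)"
      using p2 by (metis dvd_mult mod_mult_self3 mult.commute dvd_imp_mod_0 mod_add_left_eq add_0 add.commute mod_mod_cancel)
    ultimately have e1: "(U i * 2^m + x) mod 2^(m-1) = (U i * 2^m + x') mod 2^(m-1)" using xx(4) by simp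
    have ag: "\<forall>z\<in>set (interleaved_order n). 2*(n-(m-1)) \<le> rk n z \<longrightarrow>
       asg2 (U i * 2^m + x) (V i * 2^m + y) z = asg2 (U i * 2^m + x') (V i * 2^m + y) z"
      by (rule agree_lo[OF e1 refl]) (use m in simp)
    have ag2: "\<forall>z\<in>set (interleaved_order n). lvl n B (ws i) \<le> rk n z \<longrightarrow>
       asg2 (U i * 2^m + x) (V i * 2^m + y) z = asg2 (U i * 2^m + x') (V i * 2^m + y) z"
    proof (intro ballI impI)
      fix z assume "z \<in> set (interleaved_order n)" "lvl n B (ws i) \<le> rk n z"
      then show "asg2 (U i * 2^m + x) (V i * 2^m + y) z = asg2 (U i * 2^m + x') (V i * 2^m + y) z"
        using ag L by auto
    qed
    have "ends_in B (asg2 (U i * 2^m + x') (V i * 2^m + y)) (ws i) (g i x y)"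
      by (rule ends_indep[OF ob E[OF xx(1,3)]]) (use lo ag2 in auto)
    moreover have "ends_in B (asg2 (U i * 2^m + x') (V i * 2^m + y)) (ws i) (g i x' y)"
      by (rule E[OF xx(2,3)])
    ultimately show False using ends_det xx(5) by metis
  qed
  have injw: "inj_on ws I"
  proof (rule inj_onI)
    fix i j assume ij: "i \<in> I" "j \<in> I" "ws i = ws j"
    show "i = j"
    proof (rule inj[OF ij(1,2)], intro allI impI)
      fix x y :: nat assume xy: "x < 2^m" "y < 2^m"
      have e1: "(U i * 2^m + x) mod 2^m = (U j * 2^m + x) mod 2^m" by simp
      have e2: "(V i * 2^m + y) mod 2^m = (V j * 2^m + y) mod 2^m" by simp
      have ag: "\<forall>z\<in>set (interleaved_order n). 2*(n-m) \<le> rk n z \<longrightarrow>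
         asg2 (U i * 2^m + x) (V i * 2^m + y) z = asg2 (U j * 2^m + x) (V j * 2^m + y) z"
        by (rule agree_lo[OF e1 e2 m(2)])
      have ag2: "\<forall>z\<in>set (interleaved_order n). lvl n B (ws i) \<le> rk n z \<longrightarrow>
         asg2 (U i * 2^m + x) (V i * 2^m + y) z = asg2 (U j * 2^m + x) (V j * 2^m + y) z"
      proof (intro ballI impI)
        fix z assume "z \<in> set (interleaved_order n)" "lvl n B (ws i) \<le> rk n z"
        then show "asg2 (U i * 2^m + x) (V i * 2^m + y) z = asg2 (U j * 2^m + x) (V j * 2^m + y) z"
          using ag lo[of i] unfolding k_def by auto
      qed
      have "ends_in B (asg2 (U j * 2^m + x) (V j * 2^m + y)) (ws i) (g i x y)"
        by (rule ends_indep[OF ob E[OF xy]]) (use lo ag2 in auto)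
      moreover have "ends_in B (asg2 (U j * 2^m + x) (V j * 2^m + y)) (ws i) (g j x y)"
        using E[OF xy, of j] ij(3) by simp
      ultimately show "g i x y = g j x y" using ends_det by metis
    qed
  qed
  have sub: "ws ` I \<subseteq> {w \<in> nodes B. lvl n B w = 2*(n-m) \<or> lvl n B w = 2*(n-m)+1}"
  proof
    fix w assume "w \<in> ws ` I"
    then obtain i where i: "i \<in> I" "w = ws i" by blast
    show "w \<in> {w \<in> nodes B. lvl n B w = 2*(n-m) \<or> lvl n B w = 2*(n-m)+1}"
      using lo[of i] hi[OF i(1)] i(2) unfolding k_def by auto
  qed
  have fin2: "finite {w \<in> nodes B. lvl n B w = 2*(n-m) \<or> lvl n B w = 2*(n-m)+1}"
    using ob unfolding is_obdd_def by simp
  show ?thesis using card_inj_on_le[OF injw sub fin2] .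
qed




definition hh :: "nat \<Rightarrow> nat" where "hh n = n div 4"
definition Dn :: "nat \<Rightarrow> nat \<Rightarrow> nat" where
  "Dn n u = (if u mod 4 = 0 then 0 else (u div 2^(hh n + 1) div 2^((u mod 4 - 1)*(hh n + 1))) mod 2^(hh n + 1))"
definition Fn :: "nat \<Rightarrow> nat \<Rightarrow> nat" where
  "Fn n u = 2^(2*hh n) * ((u div 4) mod 2^(2*hh n - 2)) + Dn n u"
definition rr :: "nat \<Rightarrow> nat \<Rightarrow> nat" where
  "rr n u = (if u < 2^(n-1) then 2^(n-1) + Fn n u else u)"
definition aa :: "nat \<Rightarrow> real" where "aa i = real i"
definition bb :: "nat \<Rightarrow> nat \<Rightarrow> real" where "bb n i = real (rr n i) + real (i+1) / real (2^n+1)"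

lemma Dn_lt: "Dn n u < 2^(hh n + 1)"
  by (simp add: Dn_def)

lemma Fn_lt: assumes "8 \<le> n" shows "Fn n u < 2^(n-1)"
proof -
  define a where "a = 2 * hh n"
  have a: "hh n + 1 \<le> a" "2*a - 2 \<le> n - 1" "2 \<le> a" using assms unfolding a_def hh_def by linarith+
  define T where "T = (u div 4) mod 2^(a-2)"
  have T: "T + 1 \<le> 2^(a-2)" unfolding T_def by (simp add: Suc_leI)
  have D: "Dn n u < 2^a" using Dn_lt[of n u] power_increasing[OF a(1), of "2::nat"] by linarith
  have "Fn n u = 2^a * T + Dn n u" unfolding Fn_def T_def a_def by simp
  also have "\<dots> < 2^a * (T+1)" using D by simp
  also have "\<dots> \<le> 2^a * 2^(a-2)" using T by (metis mult_le_mono2)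
  also have "\<dots> = 2^(2*a-2)" using a(3) by (simp add: power_add[symmetric])
  also have "\<dots> \<le> 2^(n-1)" using a(2) by (simp add: power_increasing)
  finally show ?thesis .
qed

lemma rr_ge: "u \<le> rr n u" by (simp add: rr_def)

lemma rr_lt: assumes "8 \<le> n" "u < 2^n" shows "rr n u < 2^n"
proof (cases "u < 2^(n-1)")
  case True
  have "(2::nat)^n = 2^(n-1) + 2^(n-1)" using assms(1) by (metis mult_2 power_Suc Suc_diff_1 less_le_trans zero_less_numeral power_0 less_numeral_extra(1) linorder_not_less not_one_le_zero)
  then show ?thesis using True Fn_lt[OF assms(1), of u] by (simp add: rr_def)
qed (use assms in \<open>simp add: rr_def\<close>)

lemma frac_bounds: "i < N \<Longrightarrow> 0 < real (i+1) / real (N+1) \<and> real (i+1) / real (N+1) < 1"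
  by (simp add: divide_less_eq)

lemma nat_btw: "real (b::nat) < real i \<Longrightarrow> real i < real b + 1 \<Longrightarrow> False"
proof -
  assume a: "real b < real i" "real i < real b + 1"
  have "b < i" using a(1) by simp
  moreover have "real i < real (b + 1)" using a(2) by simp
  then have "i < b + 1" by (simp only: of_nat_less_iff)
  ultimately show False by simp
qed

lemma nat_eq_btw: "real (a::nat) < real b + 1 \<Longrightarrow> real b < real a + 1 \<Longrightarrow> a = b"
proof -
  assume a: "real a < real b + 1" "real b < real a + 1"
  have "real a < real (b+1)" "real b < real (a+1)" using a by simp_all
  then have "a < b + 1" "b < a + 1" by (simp only: of_nat_less_iff)+
  then show ?thesis by simp
qed

lemma rep: assumes "8 \<le> n" shows "interval_rep (2^n) aa (bb n)"
  unfolding interval_rep_def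
proof (intro conjI allI impI)
  fix i assume i: "i < (2::nat)^n"
  show "aa i < bb n i" using rr_ge[of i n] frac_bounds[OF i] unfolding aa_def bb_def by linarith
next
  fix i j assume i: "i < (2::nat)^n" and j: "j < (2::nat)^n"
  show "aa i \<noteq> bb n j"
  proof
    assume e: "aa i = bb n j"
    have "real (rr n j) < real i" "real i < real (rr n j) + 1"
      using e frac_bounds[OF j] unfolding aa_def bb_def by linarith+
    then show False by (rule nat_btw)
  qed
next
  fix i j assume i: "i < (2::nat)^n" and j: "j < (2::nat)^n" and ij: "i \<noteq> j"
  show "aa i \<noteq> aa j" using ij by (simp add: aa_def)
  show "bb n i \<noteq> bb n j"
  proof
    assume e: "bb n i = bb n j"
    have fi: "0 < real (i+1) / real (2^n+1)" "real (i+1) / real (2^n+1) < 1" using frac_bounds[OF i] by auto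
    have fj: "0 < real (j+1) / real (2^n+1)" "real (j+1) / real (2^n+1) < 1" using frac_bounds[OF j] by auto
    have "real (rr n i) < real (rr n j) + 1" "real (rr n j) < real (rr n i) + 1"
      using e fi fj unfolding bb_def by linarith+
    then have "rr n i = rr n j" by (rule nat_eq_btw)
    then have "real (i+1) / real (2^n+1) = real (j+1) / real (2^n+1)" using e unfolding bb_def by simp
    moreover have "(1::real) + 2^n \<noteq> 0" by (smt (verit) zero_less_power)
    ultimately have "real (i+1) = real (j+1)" by (simp add: divide_cancel_right)
    then show False using ij by simp
  qed
next
  fix i j assume "i < (2::nat)^n" "j < (2::nat)^n" "i < j"
  then show "aa i < aa j" by (simp add: aa_def)
qed

lemma iadj_iff: assumes "u < v" "v < 2^n" shows "iadj aa (bb n) u v \<longleftrightarrow> v \<le> rr n u"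
proof -
  have u: "u < 2^n" using assms by simp
  have fu: "0 < real (u+1) / real (2^n+1)" "real (u+1) / real (2^n+1) < 1" using frac_bounds[OF u] by auto
  have fv: "0 < real (v+1) / real (2^n+1)" using frac_bounds[OF assms(2)] by auto
  have bv: "aa v \<le> bb n v" using rr_ge[of v n] fv unfolding aa_def bb_def by linarith
  have "iadj aa (bb n) u v \<longleftrightarrow> aa v \<le> bb n u"
    using assms(1) bv unfolding iadj_def by (auto simp: aa_def max_def min_def)
  also have "\<dots> \<longleftrightarrow> v \<le> rr n u"
  proof
    assume "aa v \<le> bb n u"
    then have "real v < real (rr n u) + 1" using fu unfolding aa_def bb_def by linarith
    then have "real v < real (rr n u + 1)" by simp
    then have "v < rr n u + 1" by (simp only: of_nat_less_iff)
    then show "v \<le> rr n u" by simp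
  next
    assume "v \<le> rr n u" then show "aa v \<le> bb n u" using fu unfolding aa_def bb_def by simp
  qed
  finally show ?thesis .
qed


definition Qf :: "nat \<Rightarrow> nat \<Rightarrow> nat \<Rightarrow> nat \<Rightarrow> nat" where
  "Qf n m P s = 2^(n-1-m) + 2^(2*hh n - m) * ((P*2^(m-2) + s) mod 2^(2*hh n - 2))"

lemma u_lt: assumes "(P::nat) < 2^(n-1-m)" "x < 2^m" "m \<le> n - 1" shows "P*2^m + x < 2^(n-1)"
proof -
  have "P*2^m + x < (P+1)*2^m" using assms by simp
  also have "\<dots> \<le> 2^(n-1-m) * 2^m" using assms(1) by (metis Suc_eq_plus1 Suc_leI mult_le_mono1)
  also have "\<dots> = 2^(n-1)" using assms(3) by (simp add: power_add[symmetric])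
  finally show ?thesis .
qed

lemma rr_decomp:
  assumes n: "8 \<le> n" and m: "hh n + 1 \<le> m" "m \<le> 2 * hh n" and P: "P < 2^(n-1-m)"
    and s: "s < 2^(m-2)" and k: "k < 4"
  shows "rr n (P*2^m + 4*s + k) = 2^m * Qf n m P s + Dn n (P*2^m + 4*s + k)"
    and "Dn n (P*2^m + 4*s + k) < 2^m"
proof -
  have m2: "2 \<le> m" using m n unfolding hh_def by linarith
  have p4: "(2::nat)^m = 4 * 2^(m-2)" using m2 by (metis le_add_diff_inverse power_add power2_eq_square numeral_Bit0 mult_2)
  have x: "4*s + k < 2^m" using s k p4 by linarith
  have mn: "m \<le> n-1" using m n unfolding hh_def by linarith
  have ul: "P*2^m + (4*s + k) < 2^(n-1)" using u_lt[OF P x mn] by auto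
  have d4: "(P*2^m + 4*s + k) div 4 = P*2^(m-2) + s"
  proof -
    have eq: "P*2^m + 4*s + k = k + 4 * (P*2^(m-2) + s)" unfolding p4 by (simp add: algebra_simps)
    show ?thesis unfolding eq using k by simp
  qed
  have e1: "(2::nat)^(n-1) = 2^m * 2^(n-1-m)" using mn by (simp add: power_add[symmetric])
  have e2: "(2::nat)^(2*hh n) = 2^m * 2^(2*hh n - m)" using m by (simp add: power_add[symmetric])
  show "rr n (P*2^m + 4*s + k) = 2^m * Qf n m P s + Dn n (P*2^m + 4*s + k)"
    using ul unfolding rr_def Fn_def Qf_def d4 e1 e2 by (simp add: algebra_simps)
  show "Dn n (P*2^m + 4*s + k) < 2^m"
    using Dn_lt[of n "P*2^m + 4*s + k"] power_increasing[OF m(1), of "2::nat"] by linarith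
qed

lemma Dn_zero: assumes "2 \<le> m" shows "Dn n (P*2^m + 4*s) = 0"
proof -
  have "(2::nat)^m = 4 * 2^(m-2)" using assms by (metis le_add_diff_inverse power_add power2_eq_square numeral_Bit0 mult_2)
  then have "(P*2^m + 4*s) mod 4 = 0" by simp
  then show ?thesis by (simp add: Dn_def)
qed

lemma Qf_lt: assumes n: "8 \<le> n" and m: "hh n + 1 \<le> m" "m \<le> 2 * hh n"
  shows "Qf n m P s * 2^m + 2^m \<le> 2^n" and "2^(n-1) \<le> Qf n m P s * 2^m"
proof -
  define T where "T = (P*2^(m-2) + s) mod 2^(2*hh n - 2)"
  have T: "T + 1 \<le> 2^(2*hh n - 2)" unfolding T_def by (simp add: Suc_leI)
  have h: "4 * hh n \<le> n" "m \<le> n - 1" using m n unfolding hh_def by auto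
  have e1: "(2::nat)^(n-1) = 2^m * 2^(n-1-m)" using h(2) by (simp add: power_add[symmetric])
  have e2: "(2::nat)^(2*hh n) = 2^m * 2^(2*hh n - m)" using m by (simp add: power_add[symmetric])
  have e3: "(2::nat)^(2*hh n) * 2^(2*hh n - 2) = 2^(4*hh n - 2)" using m by (simp add: power_add[symmetric])
  have QQ: "Qf n m P s * 2^m = 2^(n-1) + 2^(2*hh n) * T"
    unfolding Qf_def T_def[symmetric] e1 e2 by (simp add: algebra_simps)
  have "Qf n m P s * 2^m + 2^m = 2^(n-1) + 2^(2*hh n) * T + 2^m" unfolding QQ ..
  also have "\<dots> \<le> 2^(n-1) + 2^(2*hh n) * (T+1)"
    using power_increasing[of m "2*hh n" "2::nat"] m by simp
  also have "\<dots> \<le> 2^(n-1) + 2^(2*hh n) * 2^(2*hh n - 2)" using T by (metis mult_le_mono2 add_le_mono1 add.commute)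
  also have "\<dots> = 2^(n-1) + 2^(4*hh n - 2)" unfolding e3 ..
  also have "\<dots> \<le> 2^(n-1) + 2^(n-1)" using h(1) by (simp add: power_increasing)
  also have "\<dots> = 2^n" using n by (metis mult_2 power_Suc Suc_diff_1 less_le_trans zero_less_numeral power_0 less_numeral_extra(1) linorder_not_less not_one_le_zero)
  finally show "Qf n m P s * 2^m + 2^m \<le> 2^n" .
  show "2^(n-1) \<le> Qf n m P s * 2^m" unfolding QQ by simp
qed


lemma Qf_inj: assumes n: "8 \<le> n" and m: "hh n + 1 \<le> m" "m \<le> 2 * hh n"
  and s: "s < 2^(m-2)" "s' < 2^(m-2)" and e: "Qf n m P s = Qf n m P s'"
  shows "s = s'"
proof -
  define M where "M = (2::nat)^(2*hh n - 2)"
  have "M \<ge> 2^(m-2)" unfolding M_def using m by (simp add: power_increasing)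
  then have sM: "s < M" "s' < M" using s by linarith+
  have "(2::nat)^(2*hh n - m) > 0" by simp
  then have e2: "(P*2^(m-2) + s) mod M = (P*2^(m-2) + s') mod M" using e unfolding Qf_def M_def by simp
  show ?thesis
  proof (rule ccontr)
    assume ne: "s \<noteq> s'"
    show False
    proof (cases "s < s'")
      case True
      have le: "P*2^(m-2) + s \<le> P*2^(m-2) + s'" using True by simp
      have "M dvd (P*2^(m-2) + s') - (P*2^(m-2) + s)" using e2[symmetric] mod_eq_dvd_iff_nat[OF le] by blast
      then have "M dvd s' - s" by simp
      moreover have "0 < s' - s" "s' - s < M" using True sM by auto
      ultimately show False using nat_dvd_not_less by blast
    next
      case False
      then have T: "s' < s" using ne by simp
      have le: "P*2^(m-2) + s' \<le> P*2^(m-2) + s" using T by simp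
      have "M dvd (P*2^(m-2) + s) - (P*2^(m-2) + s')" using e2 mod_eq_dvd_iff_nat[OF le] by blast
      then have "M dvd s - s'" by simp
      moreover have "0 < s - s'" "s - s' < M" using T sM by auto
      ultimately show False using nat_dvd_not_less by blast
    qed
  qed
qed

lemma aux4: "k < 4 \<Longrightarrow> (k + 4*(Z::nat)) mod 4 = k \<and> (k + 4*Z) div 4 = Z" by simp

lemma Dn_chunk: assumes n: "8 \<le> n" and m: "hh n + 1 \<le> m" "m \<le> 2 * hh n"
  and k: "1 \<le> k" "k < 4"
  shows "Dn n (P*2^m + 4*s + k) = ((P*2^(m-2)+s) div 2^(hh n - 1) div 2^((k-1)*(hh n+1))) mod 2^(hh n+1)"
proof -
  have m2: "2 \<le> m" using m n unfolding hh_def by linarith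
  have h1: "1 \<le> hh n" using n unfolding hh_def by linarith
  have p4: "(2::nat)^m = 4 * 2^(m-2)" using m2 by (metis le_add_diff_inverse power_add power2_eq_square numeral_Bit0 mult_2)
  have eq: "P*2^m + 4*s + k = k + 4 * (P*2^(m-2) + s)" unfolding p4 by (simp add: algebra_simps)
  have md: "(P*2^m + 4*s + k) mod 4 = k" unfolding eq using aux4 k by blast
  have d4: "(P*2^m + 4*s + k) div 4 = P*2^(m-2) + s" unfolding eq using aux4 k by blast
  have pc: "(2::nat)^(hh n + 1) = 4 * 2^(hh n - 1)"
  proof -
    have "hh n + 1 = 2 + (hh n - 1)" using h1 by simp
    then have "(2::nat)^(hh n+1) = 2^2 * 2^(hh n - 1)" by (metis power_add)
    then show ?thesis by simp
  qed
  have "(P*2^m + 4*s + k) div 2^(hh n + 1) = (P*2^m + 4*s + k) div 4 div 2^(hh n - 1)"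
    unfolding pc by (simp add: div_mult2_eq)
  then show ?thesis using md k unfolding Dn_def d4 by simp
qed

lemma chunks_eq: fixes x y c :: nat
  assumes "x < 2^(3*c)" "y < 2^(3*c)" "x mod 2^c = y mod 2^c"
    "(x div 2^c) mod 2^c = (y div 2^c) mod 2^c" "(x div 2^(2*c)) mod 2^c = (y div 2^(2*c)) mod 2^c"
  shows "x = y"
proof -
  have p: "(2::nat)^(3*c) = 2^(2*c) * 2^c" "(2::nat)^(2*c) = 2^c * 2^c" by (simp_all add: power_add[symmetric])
  have "x div 2^(2*c) < 2^c" using assms(1) p by (simp add: less_mult_imp_div_less)
  moreover have "y div 2^(2*c) < 2^c" using assms(2) p by (simp add: less_mult_imp_div_less)
  ultimately have a: "x div 2^(2*c) = y div 2^(2*c)" using assms(5) by simp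
  have b: "x div 2^c div 2^c = y div 2^c div 2^c" using a p by (simp add: div_mult2_eq)
  have "x div 2^c = x div 2^c mod 2^c + 2^c * (x div 2^c div 2^c)" by simp
  also have "\<dots> = y div 2^c mod 2^c + 2^c * (y div 2^c div 2^c)" using assms(4) b by simp
  also have "\<dots> = y div 2^c" by simp
  finally have c: "x div 2^c = y div 2^c" .
  have "x = x mod 2^c + 2^c * (x div 2^c)" by simp
  also have "\<dots> = y mod 2^c + 2^c * (y div 2^c)" using assms(3) c by simp
  also have "\<dots> = y" by simp
  finally show ?thesis .
qed

lemma P_recover: assumes n: "8 \<le> n" and m: "hh n + 1 \<le> m" and s: "(s::nat) < 2^(m-2)"
  shows "((P::nat)*2^(m-2)+s) div 2^(hh n - 1) div 2^(m - hh n - 1) = P"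
proof -
  have h1: "1 \<le> hh n" using n unfolding hh_def by linarith
  have "(2::nat)^(hh n - 1) * 2^(m - hh n - 1) = 2^(m-2)" using h1 m by (simp add: power_add[symmetric])
  then have "(P*2^(m-2)+s) div 2^(hh n - 1) div 2^(m - hh n - 1) = (P*2^(m-2)+s) div 2^(m-2)"
    by (simp add: div_mult2_eq[symmetric])
  also have "\<dots> = P" using s by simp
  finally show ?thesis .
qed

lemma W_bound: assumes n: "8 \<le> n" and m: "hh n + 1 \<le> m" "m \<le> 2 * hh n" and P: "(P::nat) < 2^(n-1-m)"
  and s: "(s::nat) < 2^(m-2)"
  shows "(P*2^(m-2)+s) div 2^(hh n - 1) < 2^(3*(hh n + 1))"
proof -
  have h1: "1 \<le> hh n" "n \<le> 4 * hh n + 3" using n unfolding hh_def by linarith+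
  have "P*2^(m-2)+s < (P+1)*2^(m-2)" using s by simp
  also have "\<dots> \<le> 2^(n-1-m)*2^(m-2)" using P by (metis Suc_eq_plus1 Suc_leI mult_le_mono1)
  also have "\<dots> = 2^(hh n - 1) * 2^(n - 2 - hh n)"
  proof -
    have "4 * hh n \<le> n" unfolding hh_def by simp
    then have "n - 1 - m + (m - 2) = (hh n - 1) + (n - 2 - hh n)" using m h1 n by arith
    then show ?thesis by (metis power_add)
  qed
  finally have "(P*2^(m-2)+s) div 2^(hh n - 1) < 2^(n - 2 - hh n)"
    by (simp add: less_mult_imp_div_less mult.commute)
  also have "\<dots> \<le> 2^(3*(hh n + 1))" using h1 by (simp add: power_increasing)
  finally show ?thesis .
qed





lemma blk: assumes "(a::nat) * M \<le> M * b" "\<not> a*M + 1 \<le> M*b" "0 < M" shows "a = b"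
proof -
  have "a \<le> b" using assms(1,3) by (simp add: mult.commute)
  moreover have "\<not> a < b"
  proof
    assume "a < b"
    then have "(a+1)*M \<le> b*M" by (intro mult_le_mono1) simp
    then show False using assms(2,3) by (simp add: algebra_simps)
  qed
  ultimately show ?thesis by simp
qed

lemma level_bound:
  assumes n: "8 \<le> n" and m: "hh n + 1 \<le> m" "m \<le> 2*hh n"
    and ob: "is_obdd (interleaved_order n) B" and rep: "represents B (chiE (2^n) aa (bb n))"
  shows "2^(n-3) \<le> card {w \<in> nodes B. lvl n B w = 2*(n-m) \<or> lvl n B w = 2*(n-m)+1}"
proof -
  have h: "2 \<le> hh n" "4 * hh n \<le> n" using n unfolding hh_def by linarith+
  have m3: "3 \<le> m" "m \<le> n - 1" "1 \<le> m" "m \<le> n" using m h by linarith+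
  define I where "I = {..<(2::nat)^(n-1-m)} \<times> {..<(2::nat)^(m-2)}"
  have cI: "card I = 2^(n-3)"
  proof -
    have "card I = 2^(n-1-m) * 2^(m-2)" unfolding I_def by (simp add: card_cartesian_product)
    also have "\<dots> = 2^(n-3)"
    proof -
      have "n - 1 - m + (m - 2) = n - 3" using m3 by arith
      then show ?thesis by (metis power_add)
    qed
    finally show ?thesis .
  qed
  define U where "U i = fst i" for i :: "nat \<times> nat"
  define V where "V i = Qf n m (fst i) (snd i)" for i :: "nat \<times> nat"
  define g where "g i x y = chiE (2^n) aa (bb n) (asg2 (U i * 2^m + x) (V i * 2^m + y))" for i x y
  have G: "g (P,s) x y = (Qf n m P s * 2^m + y \<le> rr n (P * 2^m + x))"
    if i: "(P,s) \<in> I" and xy: "x < 2^m" "y < 2^m" for P s x y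
  proof -
    have P: "P < 2^(n-1-m)" using i unfolding I_def by simp
    have u1: "P * 2^m + x < 2^(n-1)" by (rule u_lt[OF P xy(1) m3(2)])
    have q: "Qf n m P s * 2^m + 2^m \<le> 2^n" "2^(n-1) \<le> Qf n m P s * 2^m" using Qf_lt[OF n m] by auto
    have "(2::nat)^(n-1) < 2^n" using n by simp
    then have u2: "P * 2^m + x < 2^n" using u1 by linarith
    have v2: "Qf n m P s * 2^m + y < 2^n" using q(1) xy(2) by linarith
    have uv: "P * 2^m + x < Qf n m P s * 2^m + y" using u1 q(2) by linarith
    have "g (P,s) x y = iadj aa (bb n) (P * 2^m + x) (Qf n m P s * 2^m + y)"
      unfolding g_def U_def V_def using chiE_asg2[OF u2 v2] by simp
    then show ?thesis using iadj_iff[OF uv v2] by simp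
  qed
  have R: "rr n (P*2^m + (4*s + k)) = 2^m * Qf n m P s + Dn n (P*2^m + 4*s + k)"
    "Dn n (P*2^m + 4*s + k) < 2^m"
    if i: "(P,s) \<in> I" and k: "k < 4" for P s k
  proof -
    have P: "P < 2^(n-1-m)" and s: "s < 2^(m-2)" using i unfolding I_def by auto
    show "rr n (P*2^m + (4*s + k)) = 2^m * Qf n m P s + Dn n (P*2^m + 4*s + k)"
      using rr_decomp(1)[OF n m P s k] by (simp add: add.assoc)
    show "Dn n (P*2^m + 4*s + k) < 2^m" using rr_decomp(2)[OF n m P s k] .
  qed
  have R0: "rr n (P*2^m + 4*s) = 2^m * Qf n m P s" if i: "(P,s) \<in> I" for P s
    using R(1)[OF i, of 0] Dn_zero[of m n P s] m3 by simp
  have p4: "(2::nat)^m = 4 * 2^(m-2)"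
  proof -
    have "m = 2 + (m - 2)" using m3 by simp
    then have "(2::nat)^m = 2^2 * 2^(m-2)" by (metis power_add)
    then show ?thesis by simp
  qed
  have xb: "4*s + k < 2^m" if "(s::nat) < 2^(m-2)" "k < 4" for s k using that p4 by linarith
  have inj: "i = j" if ij: "i \<in> I" "j \<in> I" and e: "\<forall>x<2^m. \<forall>y<2^m. g i x y = g j x y" for i j
  proof -
    obtain P s where i: "i = (P,s)" by (cases i)
    obtain P' s' where j: "j = (P',s')" by (cases j)
    have iI: "(P,s) \<in> I" and jI: "(P',s') \<in> I" using ij i j by auto
    have P: "P < 2^(n-1-m)" "P' < 2^(n-1-m)" and s: "s < 2^(m-2)" "s' < 2^(m-2)"
      using iI jI unfolding I_def by auto
    have y1: "(1::nat) < 2^m" by (rule one_less_power) (use m3 in auto)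
    have sI: "(P',s) \<in> I" using P s unfolding I_def by simp
    have x0: "4*s < 2^m" using xb[OF s(1), of 0] by simp
    have ga: "g (P,s) (4*s) 0" using G[OF iI x0] R0[OF iI] by simp
    have gb: "\<not> g (P,s) (4*s) 1" using G[OF iI x0 y1] R0[OF iI] by simp
    have ga': "Qf n m P' s' * 2^m \<le> rr n (P' * 2^m + 4*s)" using e ga G[OF jI x0] x0 i j by simp
    have gb': "\<not> Qf n m P' s' * 2^m + 1 \<le> rr n (P' * 2^m + 4*s)" using e gb G[OF jI x0 y1] x0 y1 i j by simp
    have "Qf n m P' s' = Qf n m P' s" by (rule blk) (use ga' gb' R0[OF sI] in auto)
    then have "Qf n m P' s = Qf n m P' s'" by simp
    then have ss: "s = s'" using Qf_inj[OF n m s(1) s(2)] by simp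
    have dk: "Dn n (P*2^m + 4*s + k) = Dn n (P'*2^m + 4*s + k)" if k: "k < 4" for k
    proof -
      define d where "d = Dn n (P*2^m + 4*s + k)"
      define d' where "d' = Dn n (P'*2^m + 4*s + k)"
      have xk: "4*s + k < 2^m" using xb[OF s(1) k] .
      have d: "d < 2^m" "d' < 2^m" using R(2)[OF iI k] R(2)[OF sI k] unfolding d_def d'_def by auto
      have eq: "(y \<le> d) = (y \<le> d')" if y: "y < 2^m" for y
      proof -
        have "g (P,s) (4*s+k) y = g (P',s) (4*s+k) y" using e y xk i j ss by simp
        then show ?thesis using G[OF iI xk y] G[OF sI xk y] R(1)[OF iI k] R(1)[OF sI k]
          unfolding d_def d'_def by simp
      qed
      have "d \<le> d'" using eq[OF d(1)] by simp
      moreover have "d' \<le> d" using eq[OF d(2)] by simp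
      ultimately show ?thesis unfolding d_def d'_def by simp
    qed
    define c where "c = hh n + 1"
    define W where "W = (P*2^(m-2)+s) div 2^(hh n - 1)"
    define W' where "W' = (P'*2^(m-2)+s) div 2^(hh n - 1)"
    have ch: "(W div 2^((k-1)*c)) mod 2^c = (W' div 2^((k-1)*c)) mod 2^c" if k: "1 \<le> k" "k < 4" for k
      using dk[OF k(2)] Dn_chunk[OF n m k, of P s] Dn_chunk[OF n m k, of P' s]
      unfolding W_def W'_def c_def by simp
    have c1: "W mod 2^c = W' mod 2^c" using ch[of 1] by simp
    have c2: "(W div 2^c) mod 2^c = (W' div 2^c) mod 2^c" using ch[of 2] by simp
    have c3: "(W div 2^(2*c)) mod 2^c = (W' div 2^(2*c)) mod 2^c" using ch[of 3] by (simp add: mult.commute)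
    have "W = W'" by (rule chunks_eq[OF _ _ c1 c2 c3])
      (use W_bound[OF n m P(1) s(1)] W_bound[OF n m P(2) s(1)] in \<open>simp_all add: W_def W'_def c_def\<close>)
    then have "P = P'" using P_recover[OF n m(1) s(1), of P] P_recover[OF n m(1) s(1), of P']
      unfolding W_def W'_def by metis
    then show ?thesis using i j ss by simp
  qed
  have dep: "\<exists>x<2^m. \<exists>x'<2^m. \<exists>y<2^m. x mod 2^(m-1) = x' mod 2^(m-1) \<and> g i x y \<noteq> g i x' y"
    if iI0: "i \<in> I" for i
  proof -
    obtain P s where i: "i = (P,s)" by (cases i)
    have iI: "(P,s) \<in> I" using iI0 i by simp
    have P: "P < 2^(n-1-m)" and s: "s < 2^(m-2)" using iI unfolding I_def by auto
    define s2 where "s2 = (s + 2^(m-3)) mod 2^(m-2)"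
    have s2: "s2 < 2^(m-2)" unfolding s2_def by simp
    have s2I: "(P,s2) \<in> I" using P s2 unfolding I_def by simp
    have p23: "(2::nat)^(m-2) = 2 * 2^(m-3)" "(2::nat)^(m-1) = 4 * 2^(m-3)"
    proof -
      have "m - 2 = 1 + (m - 3)" "m - 1 = 2 + (m-3)" using m3 by auto
      then show "(2::nat)^(m-2) = 2 * 2^(m-3)" "(2::nat)^(m-1) = 4 * 2^(m-3)" by (simp_all add: power_add)
    qed
    have ne: "s2 \<noteq> s"
    proof
      assume e: "s2 = s"
      have le: "s \<le> s + 2^(m-3)" by simp
      have "(s + 2^(m-3)) mod 2^(m-2) = s mod 2^(m-2)" using e s unfolding s2_def by simp
      then have "2^(m-2) dvd (s + 2^(m-3)) - s" using mod_eq_dvd_iff_nat[OF le] by blast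
      then have "2 * 2^(m-3) dvd (2::nat)^(m-3)" using p23(1) by simp
      then show False using nat_dvd_not_less[of "2^(m-3)" "2 * 2^(m-3)"] by simp
    qed
    have md: "4*s mod 2^(m-1) = 4*s2 mod 2^(m-1)"
    proof -
      have "s2 mod 2^(m-3) = (s + 2^(m-3)) mod 2^(m-3)" unfolding s2_def p23(1)
        by (simp add: mod_mod_cancel)
      also have "\<dots> = s mod 2^(m-3)" by simp
      finally have "s2 mod 2^(m-3) = s mod 2^(m-3)" .
      then show ?thesis unfolding p23(2) by (simp add: mod_mult_mult1)
    qed
    have x0: "4*s < 2^m" using xb[OF s, of 0] by simp
    have x2: "4*s2 < 2^m" using xb[OF s2, of 0] by simp
    have y1: "(1::nat) < 2^m" by (rule one_less_power) (use m3 in auto)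
    have y0: "(0::nat) < 2^m" by simp
    have Qne: "Qf n m P s2 \<noteq> Qf n m P s" using Qf_inj[OF n m s2 s] ne by blast
    show ?thesis
    proof (cases "Qf n m P s2 < Qf n m P s")
      case True
      have "g (P,s) (4*s) 0" using G[OF iI x0 y0] R0[OF iI] by simp
      moreover have "\<not> g (P,s) (4*s2) 0" using G[OF iI x2 y0] R0[OF s2I] True by simp
      ultimately show ?thesis using x0 x2 y0 md i by metis
    next
      case False
      then have lt: "Qf n m P s < Qf n m P s2" using Qne by simp
      have "\<not> g (P,s) (4*s) 1" using G[OF iI x0 y1] R0[OF iI] by simp
      moreover have "g (P,s) (4*s2) 1"
      proof -
        have "(Qf n m P s + 1) * 2^m \<le> Qf n m P s2 * 2^m" using lt by (intro mult_le_mono1) simp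
        then have "Qf n m P s * 2^m + 1 \<le> 2^m * Qf n m P s2" using y1 by (simp add: algebra_simps)
        then show ?thesis using G[OF iI x2 y1] R0[OF s2I] by simp
      qed
      ultimately show ?thesis using x0 x2 y1 md i by metis
    qed
  qed
  have "card I \<le> card {w \<in> nodes B. lvl n B w = 2*(n-m) \<or> lvl n B w = 2*(n-m)+1}"
    by (rule level_count[OF ob rep m3(3) m3(4) _ g_def inj dep]) (auto simp: I_def)
  then show ?thesis using cI by simp
qed


lemma total_bound:
  assumes n: "8 \<le> n" and ob: "is_obdd (interleaved_order n) B" and rep: "represents B (chiE (2^n) aa (bb n))"
  shows "hh n * 2^(n-3) \<le> card (nodes B)"
proof -
  define S where "S m = {w \<in> nodes B. lvl n B w = 2*(n-m) \<or> lvl n B w = 2*(n-m)+1}" for m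
  define M where "M = {hh n + 1 .. 2 * hh n}"
  have h: "4 * hh n \<le> n" unfolding hh_def by simp
  have fin: "finite (nodes B)" using ob unfolding is_obdd_def by simp
  have finS: "\<forall>m\<in>M. finite (S m)" using fin unfolding S_def by simp
  have disj: "\<forall>m\<in>M. \<forall>m'\<in>M. m \<noteq> m' \<longrightarrow> S m \<inter> S m' = {}"
  proof (intro ballI impI)
    fix m m' assume mm: "m \<in> M" "m' \<in> M" "m \<noteq> m'"
    have "m \<le> n" "m' \<le> n" using mm h unfolding M_def by auto
    then show "S m \<inter> S m' = {}" using mm(3) unfolding S_def by auto
  qed
  have "(\<Sum>m\<in>M. (2::nat)^(n-3)) \<le> (\<Sum>m\<in>M. card (S m))"
  proof (rule sum_mono)
    fix m assume "m \<in> M"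
    then have "hh n + 1 \<le> m" "m \<le> 2 * hh n" unfolding M_def by auto
    then show "2^(n-3) \<le> card (S m)" unfolding S_def by (rule level_bound[OF n _ _ ob rep])
  qed
  also have "\<dots> = card (\<Union>m\<in>M. S m)"
    by (rule card_UN_disjoint[symmetric]) (use finS disj M_def in auto)
  also have "\<dots> \<le> card (nodes B)" by (rule card_mono[OF fin]) (auto simp: S_def)
  finally show ?thesis unfolding M_def by simp
qed

theorem mainTheorem3:
  shows "\<exists>c::real. c > 0 \<and> (\<exists>N0::nat. \<forall>N k. N = 2 ^ k \<and> N \<ge> N0 \<longrightarrow>
           (\<exists>a b. interval_rep N a b \<and>
              (\<forall>B::(var obdd). is_obdd (interleaved_order (clog N)) B \<and> represents B (chiE N a b)
                   \<longrightarrow> real (card (nodes B)) \<ge> c * real N * log 2 (real N))))"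
proof (intro exI[of _ "1/64"] conjI exI[of _ "256"] allI impI)
  show "(0::real) < 1/64" by simp
  fix N k :: nat assume a: "N = 2 ^ k \<and> 256 \<le> N"
  then have N: "N = 2^k" by simp
  have k: "8 \<le> k"
  proof (rule ccontr)
    assume "\<not> 8 \<le> k"
    then have "(2::nat)^k < 2^8" by (intro power_strict_increasing) auto
    then show False using a by simp
  qed
  show "\<exists>a b. interval_rep N a b \<and>
              (\<forall>B::(var obdd). is_obdd (interleaved_order (clog N)) B \<and> represents B (chiE N a b)
                   \<longrightarrow> real (card (nodes B)) \<ge> 1/64 * real N * log 2 (real N))"
  proof (rule exI[of _ aa], rule exI[of _ "bb k"], rule conjI)
    show "interval_rep N aa (bb k)" unfolding N by (rule rep[OF k])
  next
    show "\<forall>B::(var obdd). is_obdd (interleaved_order (clog N)) B \<and> represents B (chiE N aa (bb k))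
                   \<longrightarrow> real (card (nodes B)) \<ge> 1/64 * real N * log 2 (real N)"
    proof (intro allI impI)
    fix B :: "var obdd"
    assume B: "is_obdd (interleaved_order (clog N)) B \<and> represents B (chiE N aa (bb k))"
    have ob: "is_obdd (interleaved_order k) B" and rp: "represents B (chiE (2^k) aa (bb k))"
      using B unfolding N clog_pow by auto
    have tb: "hh k * 2^(k-3) \<le> card (nodes B)" by (rule total_bound[OF k ob rp])
    have lg: "log 2 (real N) = real k" unfolding N by simp
    have hk: "k \<le> 8 * hh k" using k unfolding hh_def by linarith
    have p: "(2::nat)^k = 8 * 2^(k-3)"
    proof -
      have "k = 3 + (k-3)" using k by simp
      then have "(2::nat)^k = 2^3 * 2^(k-3)" by (metis power_add)
      then show ?thesis by simp
    qed
    have "k * 2^k \<le> 64 * (hh k * 2^(k-3))"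
    proof -
      have "k * 2^k = 8 * (k * 2^(k-3))" using p by simp
      also have "\<dots> \<le> 8 * (8 * hh k * 2^(k-3))" using hk by simp
      finally show ?thesis by simp
    qed
    also have "\<dots> \<le> 64 * card (nodes B)" using tb by simp
    finally have "real (k * 2^k) \<le> real (64 * card (nodes B))" by (simp only: of_nat_le_iff)
    then have "real k * 2^k \<le> 64 * real (card (nodes B))" by simp
    then show "1/64 * real N * log 2 (real N) \<le> real (card (nodes B))"
      unfolding lg N by (simp add: algebra_simps)
  qed
  qed
qed


end
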